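(* Let $A$ be an algebra whose commutator is commutative and distributive w.r.t. arbitrary joins and such that $[\theta,\nabla_A]_A=\theta$ for all $\theta\in\mathrm{Con}(A)$. Then $A$ is a Baer algebra if and only if $\theta^\perp\in\mathcal B(\mathrm{Con}(A))$ for every $\theta\in\mathcal K(A)$.
   Context: Let $A$ be an algebra of a fixed signature. $\mathrm{Con}(A)$ is the complete lattice of congruences of $A$, with bottom $\Delta_A$ and top $\nabla_A=A^2$; $\mathrm{PCon}(A)$ is the set of principal congruences and $\mathcal K(A)$ the set of finitely generated (compact) congruences of $A$. $[\cdot,\cdot]_A$ is the term condition commutator: for $\alpha,\beta,\mu\in\mathrm{Con}(A)$, $C(\alpha,\beta;\mu)$ means that for all $n,k$, every $(n+k)$-ary term $t$, all $(a_i,b_i)\in\alpha$ and $(c_j,d_j)\in\beta$: $(t(\bar a,\bar c),t(\bar a,\bar d))\in\mu$ iff $(t(\bar b,\bar c),t(\bar b,\bar d))\in\mu$; $[\alpha,\beta]_A=\bigcap\{\mu: C(\alpha,\beta;\mu)\}$. "The commutator of $A$ is commutative and distributive w.r.t. arbitrary joins" means $[\alpha,\beta]_A=[\beta,\alpha]_A$ and $[\bigvee_{i}\alpha_i,\beta]_A=\bigvee_{i}[\alpha_i,\beta]_A$ for all families. For $\beta\in\mathrm{Con}(A)$, $\beta^\perp=\bigvee\{\alpha\in\mathrm{Con}(A):[\alpha,\beta]_A=\Delta_A\}$. $\mathcal B(\mathrm{Con}(A))$ is the set of complemented elements of the lattice $\mathrm{Con}(A)$. $A$ is a Baer algebra iff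 $\theta^\perp\in\mathcal B(\mathrm{Con}(A))$ for all $\theta\in\mathrm{PCon}(A)$. *)

theory Defs
  imports Main
begin

record ('a, 'f) ualg =
  carrier :: "'a set"
  arity :: "'f \<Rightarrow> nat"
  oper :: "'f \<Rightarrow> 'a list \<Rightarrow> 'a"

definition algebra :: "('a, 'f) ualg \<Rightarrow> bool" where
  "algebra A \<longleftrightarrow> carrier A \<noteq> {} \<and>
     (\<forall>f xs. length xs = arity A f \<and> set xs \<subseteq> carrier A \<longrightarrow> oper A f xs \<in> carrier A)"

datatype 'f uterm = Var nat | Fn 'f "'f uterm list"

primrec wf_term :: "('a, 'f) ualg \<Rightarrow> 'f uterm \<Rightarrow> bool" where
  "wf_term A (Var i) = True"
| "wf_term A (Fn f ts) = (length ts = arity A f \<and> list_all (wf_term A) ts)"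

primrec vars :: "'f uterm \<Rightarrow> nat set" where
  "vars (Var i) = {i}"
| "vars (Fn f ts) = \<Union> (set (map vars ts))"

primrec eval :: "('a, 'f) ualg \<Rightarrow> (nat \<Rightarrow> 'a) \<Rightarrow> 'f uterm \<Rightarrow> 'a" where
  "eval A e (Var i) = e i"
| "eval A e (Fn f ts) = oper A f (map (eval A e) ts)"

definition congruence :: "('a, 'f) ualg \<Rightarrow> 'a rel \<Rightarrow> bool" where
  "congruence A \<theta> \<longleftrightarrow> equiv (carrier A) \<theta> \<and>
     (\<forall>f xs ys. length xs = arity A f \<and> length ys = arity A f \<and>
        (\<forall>i < length xs. (xs ! i, ys ! i) \<in> \<theta>) \<longrightarrow> (oper A f xs, oper A f ys) \<in> \<theta>)"

definition Con :: "('a, 'f) ualg \<Rightarrow> 'a rel set" where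
  "Con A = {\<theta>. congruence A \<theta>}"

definition Delta :: "('a, 'f) ualg \<Rightarrow> 'a rel" where
  "Delta A = Id_on (carrier A)"

definition Nabla :: "('a, 'f) ualg \<Rightarrow> 'a rel" where
  "Nabla A = carrier A \<times> carrier A"

definition Cg :: "('a, 'f) ualg \<Rightarrow> 'a rel \<Rightarrow> 'a rel" where
  "Cg A X = \<Inter> {\<theta> \<in> Con A. X \<subseteq> \<theta>}"

definition ConJoin :: "('a, 'f) ualg \<Rightarrow> 'a rel set \<Rightarrow> 'a rel" where
  "ConJoin A S = Cg A (\<Union> S)"

definition PCon :: "('a, 'f) ualg \<Rightarrow> 'a rel set" where
  "PCon A = {Cg A {(a, b)} | a b. a \<in> carrier A \<and> b \<in> carrier A}"

definition KCon :: "('a, 'f) ualg \<Rightarrow> 'a rel set" where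
  "KCon A = {Cg A X | X. finite X \<and> X \<subseteq> carrier A \<times> carrier A}"

definition TC :: "('a, 'f) ualg \<Rightarrow> 'a rel \<Rightarrow> 'a rel \<Rightarrow> 'a rel \<Rightarrow> bool" where
  "TC A \<alpha> \<beta> \<mu> \<longleftrightarrow>
    (\<forall>(t :: 'f uterm) (n :: nat) (k :: nat) a b c d.
       wf_term A t \<and> vars t \<subseteq> {..< n + k} \<and>
       (\<forall>i < n. (a i, b i) \<in> \<alpha>) \<and> (\<forall>j < k. (c j, d j) \<in> \<beta>) \<longrightarrow>
       ((eval A (\<lambda>i. if i < n then a i else c (i - n)) t,
         eval A (\<lambda>i. if i < n then a i else d (i - n)) t) \<in> \<mu>
        \<longleftrightarrow>
        (eval A (\<lambda>i. if i < n then b i else c (i - n)) t,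
         eval A (\<lambda>i. if i < n then b i else d (i - n)) t) \<in> \<mu>))"

definition comm :: "('a, 'f) ualg \<Rightarrow> 'a rel \<Rightarrow> 'a rel \<Rightarrow> 'a rel" where
  "comm A \<alpha> \<beta> = \<Inter> {\<mu> \<in> Con A. TC A \<alpha> \<beta> \<mu>}"

definition comm_commutative :: "('a, 'f) ualg \<Rightarrow> bool" where
  "comm_commutative A \<longleftrightarrow> (\<forall>\<alpha> \<in> Con A. \<forall>\<beta> \<in> Con A. comm A \<alpha> \<beta> = comm A \<beta> \<alpha>)"

definition comm_join_distributive :: "('a, 'f) ualg \<Rightarrow> bool" where
  "comm_join_distributive A \<longleftrightarrow>
     (\<forall>S \<subseteq> Con A. \<forall>\<beta> \<in> Con A.
        comm A (ConJoin A S) \<beta> = ConJoin A ((\<lambda>\<alpha>. comm A \<alpha> \<beta>) ` S))"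

definition perp :: "('a, 'f) ualg \<Rightarrow> 'a rel \<Rightarrow> 'a rel" where
  "perp A \<beta> = ConJoin A {\<alpha> \<in> Con A. comm A \<alpha> \<beta> = Delta A}"

definition complemented_Con :: "('a, 'f) ualg \<Rightarrow> 'a rel set" where
  "complemented_Con A = {\<theta> \<in> Con A. \<exists>\<gamma> \<in> Con A.
      \<theta> \<inter> \<gamma> = Delta A \<and> ConJoin A {\<theta>, \<gamma>} = Nabla A}"

definition Baer :: "('a, 'f) ualg \<Rightarrow> bool" where
  "Baer A \<longleftrightarrow> (\<forall>\<theta> \<in> PCon A. perp A \<theta> \<in> complemented_Con A)"

end

theory Submission
  imports Defs
begin

lemma eval_cong:
  assumes "congruence A \<theta>"
  shows "wf_term A t \<Longrightarrow> (\<forall>i\<in>vars t. (e i, e' i) \<in> \<theta>) \<Longrightarrow> (eval A e t, eval A e' t) \<in> \<theta>"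
proof (induction t)
  case (Var x) then show ?case by simp
next
  case (Fn f ts)
  have "\<forall>i < length (map (eval A e) ts). (map (eval A e) ts ! i, map (eval A e') ts ! i) \<in> \<theta>"
  proof (intro allI impI)
    fix i assume i: "i < length (map (eval A e) ts)"
    then have m: "ts ! i \<in> set ts" by simp
    have "wf_term A (ts ! i)" using Fn.prems(1) m by (simp add: list_all_iff)
    moreover have "\<forall>j\<in>vars (ts ! i). (e j, e' j) \<in> \<theta>" using Fn.prems(2) m by auto
    ultimately show "(map (eval A e) ts ! i, map (eval A e') ts ! i) \<in> \<theta>"
      using Fn.IH[OF m] i by simp
  qed
  then show ?case using Fn.prems(1) assms unfolding congruence_def by simp
qed

lemma Con_sub: "\<theta> \<in> Con A \<Longrightarrow> \<theta> \<subseteq> Nabla A"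
  unfolding Con_def congruence_def equiv_def refl_on_def Nabla_def by auto

lemma Delta_sub: "\<theta> \<in> Con A \<Longrightarrow> Delta A \<subseteq> \<theta>"
  unfolding Con_def congruence_def equiv_def refl_on_def Delta_def by auto

lemma Con_Inter:
  assumes "S \<noteq> {}" "S \<subseteq> Con A"
  shows "\<Inter>S \<in> Con A"
proof -
  obtain s where s: "s \<in> S" using assms(1) by auto
  have "\<Inter>S \<subseteq> carrier A \<times> carrier A" using s assms(2) Con_sub[of s A] unfolding Nabla_def by auto
  moreover have "\<forall>x\<in>carrier A. (x,x) \<in> \<Inter>S"
    using assms(2) unfolding Con_def congruence_def equiv_def refl_on_def by auto
  moreover have "sym (\<Inter>S)"
    using assms(2) unfolding Con_def congruence_def equiv_def sym_def by blast
  moreover have "trans (\<Inter>S)"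
    using assms(2) unfolding Con_def congruence_def equiv_def trans_def by blast
  moreover have "\<forall>f xs ys. length xs = arity A f \<and> length ys = arity A f \<and>
        (\<forall>i < length xs. (xs ! i, ys ! i) \<in> \<Inter>S) \<longrightarrow> (oper A f xs, oper A f ys) \<in> \<Inter>S"
    using assms(2) unfolding Con_def congruence_def by blast
  ultimately show ?thesis unfolding Con_def congruence_def equiv_def refl_on_def by auto
qed

lemma Nabla_Con: "algebra A \<Longrightarrow> Nabla A \<in> Con A"
  unfolding algebra_def Con_def congruence_def equiv_def refl_on_def sym_def trans_def Nabla_def
  apply (auto)
   apply (drule_tac x=f in spec, drule_tac x=xs in spec, erule impE, auto simp: in_set_conv_nth)
  apply (drule_tac x=f in spec, drule_tac x=ys in spec, erule impE, auto simp: in_set_conv_nth)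
  done

lemma Delta_Con: "algebra A \<Longrightarrow> Delta A \<in> Con A"
proof -
  assume a: "algebra A"
  have "\<And>f xs ys. length xs = arity A f \<Longrightarrow> length ys = arity A f \<Longrightarrow>
        (\<forall>i < length xs. (xs ! i, ys ! i) \<in> Id_on (carrier A)) \<Longrightarrow> (oper A f xs, oper A f ys) \<in> Id_on (carrier A)"
  proof -
    fix f xs ys
    assume h: "length xs = arity A f" "length ys = arity A f"
        "\<forall>i < length xs. (xs ! i, ys ! i) \<in> Id_on (carrier A)"
    then have "xs = ys" by (intro nth_equalityI) auto
    moreover have "set xs \<subseteq> carrier A" using h by (auto simp: in_set_conv_nth)
    ultimately show "(oper A f xs, oper A f ys) \<in> Id_on (carrier A)" using a h unfolding algebra_def by auto
  qed
  then show ?thesis unfolding Con_def congruence_def Delta_def equiv_def refl_on_def sym_def trans_def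
    by auto
qed

lemma Cg_sup: "X \<subseteq> Cg A X" unfolding Cg_def by auto
lemma Cg_least: "\<theta> \<in> Con A \<Longrightarrow> X \<subseteq> \<theta> \<Longrightarrow> Cg A X \<subseteq> \<theta>" unfolding Cg_def by auto
lemma Cg_Con: "algebra A \<Longrightarrow> X \<subseteq> Nabla A \<Longrightarrow> Cg A X \<in> Con A"
  unfolding Cg_def by (rule Con_Inter) (use Nabla_Con in auto)
lemma Cg_id: "\<theta> \<in> Con A \<Longrightarrow> Cg A \<theta> = \<theta>"
  using Cg_sup Cg_least by blast

lemma TC_right: "\<alpha> \<in> Con A \<Longrightarrow> \<beta> \<in> Con A \<Longrightarrow> TC A \<alpha> \<beta> \<beta>"
  unfolding TC_def
proof (intro allI impI)
  fix t :: "'b uterm" and n k :: nat and a b c d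
  assume al: "\<alpha> \<in> Con A" and be: "\<beta> \<in> Con A"
  assume h: "wf_term A t \<and> vars t \<subseteq> {..< n + k} \<and>
       (\<forall>i < n. (a i, b i) \<in> \<alpha>) \<and> (\<forall>j < k. (c j, d j) \<in> \<beta>)"
  have cb: "congruence A \<beta>" using be unfolding Con_def by auto
  have rb: "\<And>x. x \<in> carrier A \<Longrightarrow> (x,x) \<in> \<beta>" using cb unfolding congruence_def equiv_def refl_on_def by auto
  have ac: "\<And>i. i < n \<Longrightarrow> a i \<in> carrier A \<and> b i \<in> carrier A" using h Con_sub[OF al] unfolding Nabla_def by blast
  have g: "\<And>x. (\<forall>i<n. x i \<in> carrier A) \<Longrightarrow>
     (eval A (\<lambda>i. if i < n then x i else c (i - n)) t, eval A (\<lambda>i. if i < n then x i else d (i - n)) t) \<in> \<beta>"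
  proof -
    fix x assume xc: "\<forall>i<n. x i \<in> carrier A"
    show "(eval A (\<lambda>i. if i < n then x i else c (i - n)) t, eval A (\<lambda>i. if i < n then x i else d (i - n)) t) \<in> \<beta>"
    proof (rule eval_cong[OF cb])
      show "wf_term A t" using h by simp
      show "\<forall>i\<in>vars t. ((if i < n then x i else c (i - n)), (if i < n then x i else d (i - n))) \<in> \<beta>"
      proof
        fix i assume "i \<in> vars t"
        then have "i < n + k" using h by auto
        then show "((if i < n then x i else c (i - n)), (if i < n then x i else d (i - n))) \<in> \<beta>"
          using xc rb h by auto
      qed
    qed
  qed
  show "((eval A (\<lambda>i. if i < n then a i else c (i - n)) t, eval A (\<lambda>i. if i < n then a i else d (i - n)) t) \<in> \<beta>) =
        ((eval A (\<lambda>i. if i < n then b i else c (i - n)) t, eval A (\<lambda>i. if i < n then b i else d (i - n)) t) \<in> \<beta>)"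
    using g[of a] g[of b] ac by auto
qed

lemma comm_right: "\<alpha> \<in> Con A \<Longrightarrow> \<beta> \<in> Con A \<Longrightarrow> comm A \<alpha> \<beta> \<subseteq> \<beta>"
  unfolding comm_def using TC_right by blast


locale bctx =
  fixes A :: "('a, 'f) ualg"
  assumes alg: "algebra A"
    and cc: "comm_commutative A"
    and cd: "comm_join_distributive A"
    and cn: "\<forall>\<theta> \<in> Con A. comm A \<theta> (Nabla A) = \<theta>"
begin

lemma cCon: "\<alpha> \<in> Con A \<Longrightarrow> \<beta> \<in> Con A \<Longrightarrow> comm A \<alpha> \<beta> \<in> Con A"
  unfolding comm_def using TC_right[of \<alpha> A \<beta>] by (intro Con_Inter) auto

lemma csub: "\<alpha> \<in> Con A \<Longrightarrow> \<beta> \<in> Con A \<Longrightarrow> comm A \<alpha> \<beta> \<subseteq> \<alpha> \<inter> \<beta>"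
  using comm_right[of \<alpha> A \<beta>] comm_right[of \<beta> A \<alpha>] cc unfolding comm_commutative_def by auto

lemma csym: "\<alpha> \<in> Con A \<Longrightarrow> \<beta> \<in> Con A \<Longrightarrow> comm A \<alpha> \<beta> = comm A \<beta> \<alpha>"
  using cc unfolding comm_commutative_def by auto

lemma JCon: "\<alpha> \<in> Con A \<Longrightarrow> \<beta> \<in> Con A \<Longrightarrow> ConJoin A {\<alpha>, \<beta>} \<in> Con A"
  unfolding ConJoin_def using alg Con_sub by (intro Cg_Con) auto

lemma Jup: "\<alpha> \<subseteq> ConJoin A {\<alpha>, \<beta>}" "\<beta> \<subseteq> ConJoin A {\<alpha>, \<beta>}"
  unfolding ConJoin_def using Cg_sup[of "\<alpha> \<union> \<beta>" A] by auto

lemma Jleast: "\<theta> \<in> Con A \<Longrightarrow> \<alpha> \<subseteq> \<theta> \<Longrightarrow> \<beta> \<subseteq> \<theta> \<Longrightarrow> ConJoin A {\<alpha>, \<beta>} \<subseteq> \<theta>"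
  unfolding ConJoin_def by (intro Cg_least) auto

lemma cdist2: "\<alpha> \<in> Con A \<Longrightarrow> \<alpha>' \<in> Con A \<Longrightarrow> \<beta> \<in> Con A \<Longrightarrow>
   comm A (ConJoin A {\<alpha>, \<alpha>'}) \<beta> = ConJoin A {comm A \<alpha> \<beta>, comm A \<alpha>' \<beta>}"
  using cd unfolding comm_join_distributive_def
  by (drule_tac x="{\<alpha>, \<alpha>'}" in spec) auto

lemma cdist2r: "\<alpha> \<in> Con A \<Longrightarrow> \<beta> \<in> Con A \<Longrightarrow> \<beta>' \<in> Con A \<Longrightarrow>
   comm A \<alpha> (ConJoin A {\<beta>, \<beta>'}) = ConJoin A {comm A \<alpha> \<beta>, comm A \<alpha> \<beta>'}"
proof -
  assume h: "\<alpha> \<in> Con A" "\<beta> \<in> Con A" "\<beta>' \<in> Con A"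
  have "comm A \<alpha> (ConJoin A {\<beta>, \<beta>'}) = comm A (ConJoin A {\<beta>, \<beta>'}) \<alpha>" using csym h JCon by blast
  also have "\<dots> = ConJoin A {comm A \<beta> \<alpha>, comm A \<beta>' \<alpha>}" using cdist2 h by blast
  also have "comm A \<beta> \<alpha> = comm A \<alpha> \<beta>" using csym h by blast
  also have "comm A \<beta>' \<alpha> = comm A \<alpha> \<beta>'" using csym h by blast
  finally show ?thesis .
qed

lemma cmono: "\<alpha> \<in> Con A \<Longrightarrow> \<alpha>' \<in> Con A \<Longrightarrow> \<beta> \<in> Con A \<Longrightarrow> \<alpha> \<subseteq> \<alpha>' \<Longrightarrow>
   comm A \<alpha> \<beta> \<subseteq> comm A \<alpha>' \<beta>"
proof -
  assume h: "\<alpha> \<in> Con A" "\<alpha>' \<in> Con A" "\<beta> \<in> Con A" "\<alpha> \<subseteq> \<alpha>'"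
  have "ConJoin A {\<alpha>, \<alpha>'} = \<alpha>'"
    using Jup(2)[of \<alpha>' \<alpha>] Jleast[OF h(2) h(4) subset_refl] by (rule subset_antisym[rotated])
  then have e: "comm A \<alpha>' \<beta> = ConJoin A {comm A \<alpha> \<beta>, comm A \<alpha>' \<beta>}" using cdist2[OF h(1-3)] by (simp only:)
  have "comm A \<alpha> \<beta> \<subseteq> ConJoin A {comm A \<alpha> \<beta>, comm A \<alpha>' \<beta>}" by (rule Jup(1))
  also have "\<dots> = comm A \<alpha>' \<beta>" using e by (rule sym)
  finally show ?thesis .
qed

lemma cmonor: "\<alpha> \<in> Con A \<Longrightarrow> \<beta> \<in> Con A \<Longrightarrow> \<beta>' \<in> Con A \<Longrightarrow> \<beta> \<subseteq> \<beta>' \<Longrightarrow>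
   comm A \<alpha> \<beta> \<subseteq> comm A \<alpha> \<beta>'"
proof -
  assume h: "\<alpha> \<in> Con A" "\<beta> \<in> Con A" "\<beta>' \<in> Con A" "\<beta> \<subseteq> \<beta>'"
  have "comm A \<alpha> \<beta> = comm A \<beta> \<alpha>" using csym h by blast
  also have "\<dots> \<subseteq> comm A \<beta>' \<alpha>" using cmono h by blast
  also have "\<dots> = comm A \<alpha> \<beta>'" using csym h by blast
  finally show ?thesis .
qed

lemma cDelta: "\<alpha> \<in> Con A \<Longrightarrow> \<beta> \<in> Con A \<Longrightarrow> Delta A \<subseteq> comm A \<alpha> \<beta>"
  using cCon Delta_sub by blast

lemma perpCon: "perp A \<beta> \<in> Con A"
  unfolding perp_def ConJoin_def using alg Con_sub by (intro Cg_Con) auto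

lemma perp_char: assumes "\<alpha> \<in> Con A" "\<beta> \<in> Con A"
  shows "\<alpha> \<subseteq> perp A \<beta> \<longleftrightarrow> comm A \<alpha> \<beta> = Delta A"
proof
  assume "comm A \<alpha> \<beta> = Delta A"
  then have "\<alpha> \<subseteq> \<Union>{\<alpha> \<in> Con A. comm A \<alpha> \<beta> = Delta A}" using assms by blast
  then show "\<alpha> \<subseteq> perp A \<beta>" unfolding perp_def ConJoin_def
    using Cg_sup[of "\<Union>{\<alpha> \<in> Con A. comm A \<alpha> \<beta> = Delta A}" A] by (rule subset_trans)
next
  let ?S = "{\<alpha> \<in> Con A. comm A \<alpha> \<beta> = Delta A}"
  assume a: "\<alpha> \<subseteq> perp A \<beta>"
  have dC: "Delta A \<in> Con A" by (rule Delta_Con[OF alg])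
  have "comm A (Delta A) \<beta> \<subseteq> Delta A" using csub[OF dC assms(2)] by blast
  then have "comm A (Delta A) \<beta> = Delta A" using cDelta[OF dC assms(2)] by blast
  then have dS: "Delta A \<in> ?S" using dC by blast
  have im: "(\<lambda>\<alpha>. comm A \<alpha> \<beta>) ` ?S = {Delta A}" using dS by auto
  have sc: "?S \<subseteq> Con A" by blast
  have "comm A (ConJoin A ?S) \<beta> = ConJoin A ((\<lambda>\<alpha>. comm A \<alpha> \<beta>) ` ?S)"
    using cd sc assms(2) unfolding comm_join_distributive_def by blast
  then have "comm A (perp A \<beta>) \<beta> = ConJoin A ((\<lambda>\<alpha>. comm A \<alpha> \<beta>) ` ?S)"
    unfolding perp_def .
  also have "\<dots> = ConJoin A {Delta A}" by (simp only: im)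
  also have "\<dots> = Delta A" unfolding ConJoin_def using Cg_id[OF dC] by simp
  finally have "comm A (perp A \<beta>) \<beta> = Delta A" .
  then show "comm A \<alpha> \<beta> = Delta A" using cmono[OF assms(1) perpCon assms(2) a] cDelta[OF assms] by blast
qed

lemma Jdelta: "\<alpha> \<in> Con A \<Longrightarrow> \<beta> \<in> Con A \<Longrightarrow> ConJoin A {\<alpha>, \<beta>} = Delta A \<longleftrightarrow> \<alpha> = Delta A \<and> \<beta> = Delta A"
proof -
  assume h: "\<alpha> \<in> Con A" "\<beta> \<in> Con A"
  show ?thesis
  proof
    assume e: "ConJoin A {\<alpha>, \<beta>} = Delta A"
    show "\<alpha> = Delta A \<and> \<beta> = Delta A"
      using Jup(1)[of \<alpha> \<beta>] Jup(2)[of \<beta> \<alpha>] e Delta_sub[OF h(1)] Delta_sub[OF h(2)] by auto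
  next
    assume "\<alpha> = Delta A \<and> \<beta> = Delta A"
    then show "ConJoin A {\<alpha>, \<beta>} = Delta A" unfolding ConJoin_def using Cg_id[OF Delta_Con[OF alg]] by simp
  qed
qed

lemma perp_join: assumes "\<beta>1 \<in> Con A" "\<beta>2 \<in> Con A"
  shows "perp A (ConJoin A {\<beta>1, \<beta>2}) = perp A \<beta>1 \<inter> perp A \<beta>2"
proof -
  have key: "\<And>\<alpha>. \<alpha> \<in> Con A \<Longrightarrow> \<alpha> \<subseteq> perp A (ConJoin A {\<beta>1, \<beta>2}) \<longleftrightarrow> \<alpha> \<subseteq> perp A \<beta>1 \<inter> perp A \<beta>2"
  proof -
    fix \<alpha> assume a: "\<alpha> \<in> Con A"
    have "\<alpha> \<subseteq> perp A (ConJoin A {\<beta>1, \<beta>2}) \<longleftrightarrow> comm A \<alpha> (ConJoin A {\<beta>1, \<beta>2}) = Delta A"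
      using perp_char a JCon assms by blast
    also have "\<dots> \<longleftrightarrow> comm A \<alpha> \<beta>1 = Delta A \<and> comm A \<alpha> \<beta>2 = Delta A"
      using cdist2r[OF a assms] Jdelta cCon a assms by simp
    also have "\<dots> \<longleftrightarrow> \<alpha> \<subseteq> perp A \<beta>1 \<inter> perp A \<beta>2" using perp_char a assms by blast
    finally show "\<alpha> \<subseteq> perp A (ConJoin A {\<beta>1, \<beta>2}) \<longleftrightarrow> \<alpha> \<subseteq> perp A \<beta>1 \<inter> perp A \<beta>2" .
  qed
  have ic: "perp A \<beta>1 \<inter> perp A \<beta>2 \<in> Con A" using Con_Inter[of "{perp A \<beta>1, perp A \<beta>2}" A] perpCon by auto
  show ?thesis using key[OF perpCon] key[OF ic] by blast
qed

lemma compl_absorb: assumes "\<sigma> \<in> Con A" "\<gamma> \<in> Con A" "\<sigma> \<inter> \<gamma> = Delta A" "ConJoin A {\<sigma>, \<gamma>} = Nabla A"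
  and "y \<in> Con A" "y \<subseteq> \<sigma>"
  shows "comm A \<sigma> y = y"
proof -
  have "y = comm A y (Nabla A)" using cn assms by auto
  also have "\<dots> = ConJoin A {comm A y \<sigma>, comm A y \<gamma>}" using cdist2r assms by metis
  also have "comm A y \<gamma> = Delta A"
  proof -
    have "comm A y \<gamma> \<subseteq> \<sigma> \<inter> \<gamma>" using csub[OF assms(5) assms(2)] assms(6) by blast
    then show ?thesis using cDelta[OF assms(5) assms(2)] assms(3) by blast
  qed
  also have "ConJoin A {comm A y \<sigma>, Delta A} = comm A y \<sigma>"
  proof (rule subset_antisym)
    have c: "comm A y \<sigma> \<in> Con A" using cCon assms by blast
    show "ConJoin A {comm A y \<sigma>, Delta A} \<subseteq> comm A y \<sigma>"
      using Jleast[OF c subset_refl Delta_sub[OF c]] .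
    show "comm A y \<sigma> \<subseteq> ConJoin A {comm A y \<sigma>, Delta A}" by (rule Jup(1))
  qed
  finally show ?thesis using csym assms by simp
qed

lemma compl_meet: assumes "s1 \<in> complemented_Con A" "s2 \<in> complemented_Con A"
  shows "s1 \<inter> s2 \<in> complemented_Con A"
proof -
  obtain g1 where g1: "s1 \<in> Con A" "g1 \<in> Con A" "s1 \<inter> g1 = Delta A" "ConJoin A {s1, g1} = Nabla A"
    using assms(1) unfolding complemented_Con_def by auto
  obtain g2 where g2: "s2 \<in> Con A" "g2 \<in> Con A" "s2 \<inter> g2 = Delta A" "ConJoin A {s2, g2} = Nabla A"
    using assms(2) unfolding complemented_Con_def by auto
  define J where "J = ConJoin A {g1, g2}"
  have JC: "J \<in> Con A" unfolding J_def using JCon g1 g2 by auto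
  have mC: "s1 \<inter> s2 \<in> Con A" using Con_Inter[of "{s1, s2}" A] g1 g2 by auto
  define x where "x = s1 \<inter> s2 \<inter> J"
  have xC: "x \<in> Con A" unfolding x_def using Con_Inter[of "{s1, s2, J}" A] g1 g2 JC by (auto simp: Int_assoc)
  have "x = comm A s1 x" using compl_absorb[OF g1 xC] x_def by auto
  also have "\<dots> \<subseteq> comm A s1 J" using cmonor[OF g1(1) xC JC] x_def by auto
  also have "\<dots> = ConJoin A {comm A s1 g1, comm A s1 g2}" unfolding J_def using cdist2r g1 g2 by auto
  also have "\<dots> \<subseteq> g2"
    using Jleast[OF g2(2)] csub[OF g1(1,2)] g1(3) Delta_sub[OF g2(2)] csub[OF g1(1) g2(2)] by auto
  finally have "x \<subseteq> Delta A" using g2(3) x_def by auto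
  then have m: "(s1 \<inter> s2) \<inter> J = Delta A" using Delta_sub[OF xC] x_def by auto
  define K where "K = ConJoin A {s1 \<inter> s2, J}"
  have KC: "K \<in> Con A" unfolding K_def using JCon mC JC by auto
  have "s1 = comm A s1 (Nabla A)" using cn g1 by auto
  also have "\<dots> = ConJoin A {comm A s1 s2, comm A s1 g2}" using cdist2r g1 g2 by metis
  also have "\<dots> \<subseteq> K"
  proof (rule Jleast[OF KC])
    show "comm A s1 s2 \<subseteq> K" using csub[OF g1(1) g2(1)] Jup(1)[of "s1 \<inter> s2" J] K_def by auto
    show "comm A s1 g2 \<subseteq> K" using csub[OF g1(1) g2(2)] Jup(2)[of g2 g1] Jup(2)[of J "s1 \<inter> s2"] K_def J_def by auto
  qed
  finally have "Nabla A \<subseteq> K" using g1(4) Jleast[OF KC, of s1 g1] Jup(1)[of g1 g2] Jup(2)[of J "s1 \<inter> s2"] K_def J_def by auto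
  then have "K = Nabla A" using Con_sub[OF KC] by auto
  then show ?thesis using m mC JC unfolding complemented_Con_def K_def by auto
qed

lemma perp_K: assumes "finite X" "X \<subseteq> carrier A \<times> carrier A"
  and P: "\<forall>\<theta> \<in> PCon A. perp A \<theta> \<in> complemented_Con A"
  shows "perp A (Cg A X) \<in> complemented_Con A"
  using assms(1,2)
proof (induction X rule: finite_induct)
  case empty
  have dC: "Delta A \<in> Con A" by (rule Delta_Con[OF alg])
  have cD: "Cg A {} = Delta A"
  proof (rule subset_antisym)
    show "Cg A {} \<subseteq> Delta A" using Cg_least[OF dC, of "{}"] by simp
    have "Cg A {} \<in> Con A" using Cg_Con[OF alg, of "{}"] by simp
    then show "Delta A \<subseteq> Cg A {}" by (rule Delta_sub)
  qed
  have "\<And>\<alpha>. \<alpha> \<in> Con A \<Longrightarrow> \<alpha> \<subseteq> perp A (Delta A)"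
  proof -
    fix \<alpha> assume a: "\<alpha> \<in> Con A"
    have "comm A \<alpha> (Delta A) \<subseteq> Delta A" using csub[OF a Delta_Con[OF alg]] by blast
    then have "comm A \<alpha> (Delta A) = Delta A" using cDelta[OF a Delta_Con[OF alg]] by blast
    then show "\<alpha> \<subseteq> perp A (Delta A)" using perp_char[OF a Delta_Con[OF alg]] by blast
  qed
  then have "Nabla A \<subseteq> perp A (Delta A)" using Nabla_Con[OF alg] by blast
  then have pN: "perp A (Delta A) = Nabla A" using Con_sub[OF perpCon] by (rule subset_antisym[rotated])
  have "ConJoin A {Nabla A, Delta A} = Nabla A"
  proof (rule subset_antisym)
    show "ConJoin A {Nabla A, Delta A} \<subseteq> Nabla A"
      using Jleast[OF Nabla_Con[OF alg] subset_refl Delta_sub[OF Nabla_Con[OF alg]]] .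
    show "Nabla A \<subseteq> ConJoin A {Nabla A, Delta A}" by (rule Jup(1))
  qed
  moreover have "Nabla A \<inter> Delta A = Delta A" using Con_sub[OF dC] by blast
  ultimately have "Nabla A \<in> complemented_Con A" using Nabla_Con[OF alg] dC unfolding complemented_Con_def by blast
  then show ?case using cD pN by simp
next
  case (insert p X)
  obtain a b where p: "p = (a, b)" by force
  have ab: "a \<in> carrier A" "b \<in> carrier A" using insert.prems p by auto
  have XN: "X \<subseteq> Nabla A" "{p} \<subseteq> Nabla A" "insert p X \<subseteq> Nabla A" using insert.prems unfolding Nabla_def by auto
  have c1: "Cg A {p} \<in> Con A" "Cg A X \<in> Con A" using Cg_Con[OF alg] XN by auto
  have IH: "perp A (Cg A X) \<in> complemented_Con A" using insert.IH insert.prems by blast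
  have "Cg A (insert p X) = ConJoin A {Cg A {p}, Cg A X}"
  proof (rule subset_antisym)
    show "Cg A (insert p X) \<subseteq> ConJoin A {Cg A {p}, Cg A X}"
    proof (rule Cg_least[OF JCon[OF c1]])
      have "{p} \<subseteq> ConJoin A {Cg A {p}, Cg A X}" using Cg_sup[of "{p}" A] Jup(1)[of "Cg A {p}" "Cg A X"] by blast
      moreover have "X \<subseteq> ConJoin A {Cg A {p}, Cg A X}" using Cg_sup[of X A] Jup(2)[of "Cg A X" "Cg A {p}"] by blast
      ultimately show "insert p X \<subseteq> ConJoin A {Cg A {p}, Cg A X}" by blast
    qed
    have ci: "Cg A (insert p X) \<in> Con A" using Cg_Con[OF alg] XN(3) by blast
    show "ConJoin A {Cg A {p}, Cg A X} \<subseteq> Cg A (insert p X)"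
    proof (rule Jleast[OF ci])
      show "Cg A {p} \<subseteq> Cg A (insert p X)" using Cg_sup[of "insert p X" A] by (intro Cg_least[OF ci]) blast
      show "Cg A X \<subseteq> Cg A (insert p X)" using Cg_sup[of "insert p X" A] by (intro Cg_least[OF ci]) blast
    qed
  qed
  then have "perp A (Cg A (insert p X)) = perp A (Cg A {p}) \<inter> perp A (Cg A X)"
    using perp_join[OF c1] by (simp only:)
  moreover have "Cg A {p} \<in> PCon A" unfolding PCon_def using p ab by auto
  ultimately show ?case using compl_meet[OF _ IH] P by (simp only:)
qed

end

theorem mainTheorem5:
  fixes A :: "('a, 'f) ualg"
  assumes "algebra A"
    and "comm_commutative A"
    and "comm_join_distributive A"
    and "\<forall>\<theta> \<in> Con A. comm A \<theta> (Nabla A) = \<theta>"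
  shows "Baer A \<longleftrightarrow> (\<forall>\<theta> \<in> KCon A. perp A \<theta> \<in> complemented_Con A)"
proof -
  interpret bctx A using assms by unfold_locales
  have "PCon A \<subseteq> KCon A" unfolding PCon_def KCon_def by blast
  show ?thesis
  proof
    assume b: "Baer A"
    show "\<forall>\<theta> \<in> KCon A. perp A \<theta> \<in> complemented_Con A"
    proof
      fix \<theta> assume "\<theta> \<in> KCon A"
      then obtain X where "\<theta> = Cg A X" "finite X" "X \<subseteq> carrier A \<times> carrier A" unfolding KCon_def by blast
      then show "perp A \<theta> \<in> complemented_Con A" using perp_K b unfolding Baer_def by blast
    qed
  next
    assume "\<forall>\<theta> \<in> KCon A. perp A \<theta> \<in> complemented_Con A"
    then show "Baer A" unfolding Baer_def using \<open>PCon A \<subseteq> KCon A\<close> by blast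
  qed
qed

end
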